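(* For every $d\ge2$ and every $\epsilon\le\frac1{10}$, any bounded-error non-adaptive $\epsilon$-tester for convexity of functions $f\colon[n]^d\to\mathbb{R}$ has query complexity $\Omega\!\left((\tfrac nd)^{d/2}\right)$.
   Context: $[n]=\{0,\dots,n-1\}$ and $[n]^d\subseteq\mathbb{R}^d$. A function $f\colon X\to\mathbb{R}$ on a finite set $X\subseteq\mathbb{R}^d$ is convex if for every finite collection $x_1,\dots,x_k\in X$ and reals $\lambda_i\ge0$ with $\sum_i\lambda_i=1$ and $\sum_i\lambda_ix_i\in X$, one has $f(\sum_i\lambda_ix_i)\le\sum_i\lambda_if(x_i)$. $g$ is $\epsilon$-far from convex if every convex $h$ differs from $g$ on at least $\epsilon|X|$ points. A bounded-error $\epsilon$-tester is a randomized query algorithm accepting convex functions with probability at least $2/3$ and rejecting $\epsilon$-far functions with probability at least $2/3$; it is non-adaptive if all queried points are chosen before any value is observed. *)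

theory Defs
  imports "HOL-Probability.Probability"
begin

text \<open>Points of R^d are represented as functions nat => real that vanish at
  coordinates >= d (d varies within the statement).\<close>
type_synonym point = "nat \<Rightarrow> real"

definition grid :: "nat \<Rightarrow> nat \<Rightarrow> point set" where
  "grid n d = {x. (\<forall>i<d. x i \<in> real ` {0..<n}) \<and> (\<forall>i\<ge>d. x i = 0)}"

definition convex_comb :: "nat \<Rightarrow> (nat \<Rightarrow> real) \<Rightarrow> (nat \<Rightarrow> point) \<Rightarrow> point" where
  "convex_comb k l x = (\<lambda>j. \<Sum>i<k. l i * x i j)"

definition convex_fun_on :: "point set \<Rightarrow> (point \<Rightarrow> real) \<Rightarrow> bool" where
  "convex_fun_on X f \<longleftrightarrow>
     (\<forall>k l x. (\<forall>i<k. x i \<in> X) \<and> (\<forall>i<k. 0 \<le> l i) \<and> (\<Sum>i<k. l i) = 1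
          \<and> convex_comb k l x \<in> X
        \<longrightarrow> f (convex_comb k l x) \<le> (\<Sum>i<k. l i * f (x i)))"

definition far_from_convex :: "real \<Rightarrow> point set \<Rightarrow> (point \<Rightarrow> real) \<Rightarrow> bool" where
  "far_from_convex \<epsilon> X g \<longleftrightarrow>
     (\<forall>h. convex_fun_on X h \<longrightarrow> real (card {x\<in>X. g x \<noteq> h x}) \<ge> \<epsilon> * real (card X))"

text \<open>A non-adaptive randomized tester: a distribution over pairs (Q, D) of a
  list of query points chosen in advance and a (randomized) decision rule
  D giving the acceptance probability for the observed values.\<close>
type_synonym tester = "(point list \<times> (real list \<Rightarrow> real)) pmf"

definition accept_prob :: "tester \<Rightarrow> (point \<Rightarrow> real) \<Rightarrow> real" where
  "accept_prob T f = measure_pmf.expectation T (\<lambda>(Q, D). D (map f Q))"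

definition nonadaptive_tester :: "real \<Rightarrow> point set \<Rightarrow> tester \<Rightarrow> bool" where
  "nonadaptive_tester \<epsilon> X T \<longleftrightarrow>
     (\<forall>t\<in>set_pmf T. set (fst t) \<subseteq> X \<and> (\<forall>v. 0 \<le> snd t v \<and> snd t v \<le> 1)) \<and>
     (\<forall>f. convex_fun_on X f \<longrightarrow> accept_prob T f \<ge> 2/3) \<and>
     (\<forall>f. far_from_convex \<epsilon> X f \<longrightarrow> 1 - accept_prob T f \<ge> 2/3)"

definition query_bound :: "tester \<Rightarrow> nat \<Rightarrow> bool" where
  "query_bound T q \<longleftrightarrow> (\<forall>t\<in>set_pmf T. length (fst t) \<le> q)"

end

theory Submission
  imports Defs
begin

definition Lf :: "(nat \<Rightarrow> int) \<Rightarrow> point \<Rightarrow> nat \<Rightarrow> nat \<Rightarrow> real" where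
  "Lf w x a c = x a * real_of_int (w c) - x c * real_of_int (w a)"

definition Psi :: "nat \<Rightarrow> (nat \<Rightarrow> int) \<Rightarrow> point \<Rightarrow> real" where
  "Psi d w x = (\<Sum>a<d. \<Sum>c<d. (Lf w x a c)^2)"

definition piw :: "nat \<Rightarrow> (nat \<Rightarrow> int) \<Rightarrow> point \<Rightarrow> (nat \<times> nat \<Rightarrow> real)" where
  "piw d w x = (\<lambda>(a,c). if a < d \<and> c < d then Lf w x a c else 0)"

definition Ff :: "nat \<Rightarrow> (nat \<Rightarrow> int) \<Rightarrow> ((nat \<times> nat \<Rightarrow> real) \<Rightarrow> nat) \<Rightarrow> point \<Rightarrow> real" where
  "Ff d w k x = Psi d w x - real (k (piw d w x))"

lemma grid_int: "x \<in> grid n d \<Longrightarrow> x a \<in> \<int>"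
  unfolding grid_def by (cases "a < d") (auto simp: image_iff)

lemma var_identity:
  fixes l v :: "nat \<Rightarrow> real"
  assumes "(\<Sum>i<k. l i) = 1"
  shows "(\<Sum>i<k. l i * (v i)^2) - (\<Sum>i<k. l i * v i)^2 = (\<Sum>i<k. l i * (v i - (\<Sum>j<k. l j * v j))^2)"
proof -
  define u where "u = (\<Sum>j<k. l j * v j)"
  have "(\<Sum>i<k. l i * (v i - u)^2) = (\<Sum>i<k. l i * (v i)^2 - 2 * u * (l i * v i) + u^2 * l i)"
    by (rule sum.cong) (auto simp: power2_eq_square algebra_simps)
  also have "\<dots> = (\<Sum>i<k. l i * (v i)^2) - 2 * u * u + u^2 * 1"
    by (simp add: sum.distrib sum_subtractf sum_distrib_left[symmetric] u_def assms)
  finally show ?thesis by (simp add: u_def power2_eq_square)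
qed

lemma Lf_comb:
  "Lf w (convex_comb k l x) a c = (\<Sum>i<k. l i * Lf w (x i) a c)"
  unfolding Lf_def convex_comb_def
  by (simp add: sum_distrib_right right_diff_distrib sum_subtractf sum_distrib_left mult.left_commute mult.commute)

lemma Lf_int: "x \<in> grid n d \<Longrightarrow> y \<in> grid n d \<Longrightarrow> Lf w x a c - Lf w y a c \<in> \<int>"
  unfolding Lf_def using grid_int[of x n d] grid_int[of y n d]
  by (intro Ints_diff Ints_mult Ints_of_int) auto

lemma convex_F:
  assumes kb: "\<And>x. x \<in> grid n d \<Longrightarrow> k (piw d w x) \<le> 1"
  shows "convex_fun_on (grid n d) (Ff d w k)"
  unfolding convex_fun_on_def
proof (intro allI impI, elim conjE)
  fix m l x
  assume xs: "\<forall>i<m. x i \<in> grid n d" and lpos: "\<forall>i<m. 0 \<le> l i" and ls: "(\<Sum>i<m. l i) = 1"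
    and yg: "convex_comb m l x \<in> grid n d"
  define y where "y = convex_comb m l x"
  define b where "b = (\<lambda>z. real (k (piw d w z)))"
  define D where "D = (\<lambda>i. (\<Sum>a<d. \<Sum>c<d. (Lf w (x i) a c - Lf w y a c)^2))"
  have slack: "(\<Sum>i<m. l i * Psi d w (x i)) - Psi d w y = (\<Sum>i<m. l i * D i)"
  proof -
    have "(\<Sum>i<m. l i * Psi d w (x i)) - Psi d w y =
      (\<Sum>a<d. \<Sum>c<d. (\<Sum>i<m. l i * (Lf w (x i) a c)^2) - (Lf w y a c)^2)"
    proof -
      have sw: "(\<Sum>i<m. l i * Psi d w (x i)) = (\<Sum>a<d. \<Sum>c<d. \<Sum>i<m. l i * (Lf w (x i) a c)^2)"
      proof -
        have "(\<Sum>i<m. l i * Psi d w (x i)) = (\<Sum>i<m. \<Sum>a<d. \<Sum>c<d. l i * (Lf w (x i) a c)^2)"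
          unfolding Psi_def by (simp add: sum_distrib_left)
        also have "\<dots> = (\<Sum>a<d. \<Sum>i<m. \<Sum>c<d. l i * (Lf w (x i) a c)^2)" by (rule sum.swap)
        also have "\<dots> = (\<Sum>a<d. \<Sum>c<d. \<Sum>i<m. l i * (Lf w (x i) a c)^2)"
          by (rule sum.cong[OF refl], rule sum.swap)
        finally show ?thesis .
      qed
      show ?thesis apply (subst sw) by (simp add: Psi_def sum_subtractf)
    qed
    also have "\<dots> = (\<Sum>a<d. \<Sum>c<d. \<Sum>i<m. l i * (Lf w (x i) a c - Lf w y a c)^2)"
      unfolding y_def Lf_comb using var_identity[OF ls] by simp
    also have "\<dots> = (\<Sum>i<m. l i * D i)"
    proof -
      have "(\<Sum>i<m. l i * D i) = (\<Sum>i<m. \<Sum>a<d. \<Sum>c<d. l i * (Lf w (x i) a c - Lf w y a c)^2)"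
        unfolding D_def by (simp add: sum_distrib_left)
      also have "\<dots> = (\<Sum>a<d. \<Sum>i<m. \<Sum>c<d. l i * (Lf w (x i) a c - Lf w y a c)^2)" by (rule sum.swap)
      also have "\<dots> = (\<Sum>a<d. \<Sum>c<d. \<Sum>i<m. l i * (Lf w (x i) a c - Lf w y a c)^2)"
        by (rule sum.cong[OF refl], rule sum.swap)
      finally show ?thesis by simp
    qed
    finally show ?thesis .
  qed
  have trm: "l i * (b (x i) - b y) \<le> l i * D i" if "i < m" for i
  proof -
    have xi: "x i \<in> grid n d" using xs that by auto
    have Dnn: "0 \<le> D i" unfolding D_def by (intro sum_nonneg) auto
    show ?thesis
    proof (cases "piw d w (x i) = piw d w y")
      case True
      then show ?thesis using Dnn lpos that by (simp add: b_def)
    next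
      case False
      then obtain a c where ac: "a < d" "c < d" "Lf w (x i) a c \<noteq> Lf w y a c"
        unfolding piw_def by (auto simp: fun_eq_iff split: if_splits)
      have "Lf w (x i) a c - Lf w y a c \<in> \<int>" using Lf_int[OF xi yg[folded y_def]] .
      then have "1 \<le> \<bar>Lf w (x i) a c - Lf w y a c\<bar>" using ac(3) by (intro Ints_nonzero_abs_ge1) auto
      then have one: "1 \<le> (Lf w (x i) a c - Lf w y a c)^2"
        by (metis abs_ge_self abs_le_square_iff abs_of_nonneg dual_order.trans one_power2 zero_le_one power2_abs)
      have "(Lf w (x i) a c - Lf w y a c)^2 \<le> (\<Sum>c<d. (Lf w (x i) a c - Lf w y a c)^2)"
        using ac by (intro member_le_sum) auto
      also have "\<dots> \<le> D i" unfolding D_def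
        using ac by (intro member_le_sum[where f="\<lambda>a. \<Sum>c<d. (Lf w (x i) a c - Lf w y a c)^2"] sum_nonneg) auto
      finally have "1 \<le> D i" using one by linarith
      moreover have "b (x i) - b y \<le> 1" using kb[OF xi] unfolding b_def by simp
      ultimately show ?thesis using lpos that by (intro mult_left_mono) auto
    qed
  qed
  have "(\<Sum>i<m. l i * (b (x i) - b y)) \<le> (\<Sum>i<m. l i * D i)"
    by (intro sum_mono trm) auto
  moreover have "(\<Sum>i<m. l i * (b (x i) - b y)) = (\<Sum>i<m. l i * b (x i)) - b y"
    by (simp add: right_diff_distrib sum_subtractf sum_distrib_right[symmetric] ls)
  ultimately have "Ff d w k y \<le> (\<Sum>i<m. l i * Ff d w k (x i))"
    unfolding Ff_def b_def using slack
    by (simp add: right_diff_distrib sum_subtractf)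
  then show "Ff d w k (convex_comb m l x) \<le> (\<Sum>i<m. l i * Ff d w k (x i))" by (simp add: y_def)
qed

definition emb :: "nat \<Rightarrow> (nat \<Rightarrow> nat) \<Rightarrow> point" where
  "emb d f = (\<lambda>i. if i < d then real (f i) else 0)"

lemma inj_emb: "inj_on (emb d) (PiE {..<d} B)"
proof (rule inj_onI)
  fix f g assume f: "f \<in> PiE {..<d} B" and g: "g \<in> PiE {..<d} B" and e: "emb d f = emb d g"
  show "f = g"
  proof (rule PiE_ext[OF f g])
    fix i assume "i \<in> {..<d}"
    then show "f i = g i" using fun_cong[OF e, of i] unfolding emb_def by auto
  qed
qed

lemma grid_emb: "grid n d = emb d ` PiE {..<d} (\<lambda>_. {..<n})"
proof
  show "grid n d \<subseteq> emb d ` PiE {..<d} (\<lambda>_. {..<n})"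
  proof
    fix x assume x: "x \<in> grid n d"
    have "\<forall>i. \<exists>m. i < d \<longrightarrow> m < n \<and> x i = real m" using x unfolding grid_def by fastforce
    then obtain f where f: "\<And>i. i < d \<Longrightarrow> f i < n \<and> x i = real (f i)" by metis
    define g where "g = restrict f {..<d}"
    have "g \<in> PiE {..<d} (\<lambda>_. {..<n})" using f unfolding g_def by auto
    moreover have "emb d g = x" using f x unfolding emb_def g_def grid_def by (auto simp: fun_eq_iff)
    ultimately show "x \<in> emb d ` PiE {..<d} (\<lambda>_. {..<n})" by blast
  qed
  show "emb d ` PiE {..<d} (\<lambda>_. {..<n}) \<subseteq> grid n d"
    unfolding grid_def emb_def by (auto simp: PiE_iff)
qed

lemma finite_grid: "finite (grid n d)"
  unfolding grid_emb by (intro finite_imageI finite_PiE) auto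

lemma card_grid: "card (grid n d) = n ^ d"
  unfolding grid_emb by (subst card_image[OF inj_emb]) (simp add: card_PiE)

definition tau :: "(nat \<Rightarrow> int) \<Rightarrow> point \<Rightarrow> int" where
  "tau w x = \<lfloor>x 0 / real_of_int (w 0)\<rfloor>"

definition bG :: "nat \<Rightarrow> (nat \<Rightarrow> int) \<Rightarrow> ((nat \<times> nat \<Rightarrow> real) \<Rightarrow> nat) \<Rightarrow> point \<Rightarrow> int" where
  "bG d w k x = (int (k (piw d w x)) + tau w x) mod 2"

definition Gf :: "nat \<Rightarrow> (nat \<Rightarrow> int) \<Rightarrow> ((nat \<times> nat \<Rightarrow> real) \<Rightarrow> nat) \<Rightarrow> point \<Rightarrow> real" where
  "Gf d w k x = Psi d w x - real_of_int (bG d w k x)"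

definition sh :: "int \<Rightarrow> (nat \<Rightarrow> int) \<Rightarrow> point \<Rightarrow> point" where
  "sh t w x = (\<lambda>j. x j + real_of_int t * real_of_int (w j))"

lemma Lf_sh: "Lf w (sh t w x) a c = Lf w x a c"
  unfolding Lf_def sh_def by (simp add: algebra_simps)

lemma Psi_sh: "Psi d w (sh t w x) = Psi d w x"
  unfolding Psi_def by (simp add: Lf_sh)

lemma piw_sh: "piw d w (sh t w x) = piw d w x"
  by (auto simp: piw_def Lf_sh fun_eq_iff)

lemma tau_sh: assumes "w 0 \<ge> 1" shows "tau w (sh t w x) = tau w x + t"
proof -
  have "sh t w x 0 / real_of_int (w 0) = x 0 / real_of_int (w 0) + real_of_int t"
    using assms unfolding sh_def by (simp add: field_simps)
  then show ?thesis unfolding tau_def by simp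
qed

lemma bG_sh: assumes "w 0 \<ge> 1" shows "bG d w k (sh t w x) = (bG d w k x + t) mod 2"
  unfolding bG_def piw_sh tau_sh[of w, OF assms] by (simp add: mod_add_left_eq add.assoc)

lemma bG_range: "bG d w k x = 0 \<or> bG d w k x = 1"
  unfolding bG_def by auto

lemma sh_sh: "sh s w (sh t w x) = sh (s + t) w x"
  unfolding sh_def by (auto simp: fun_eq_iff algebra_simps)

lemma sh_0: "sh 0 w x = x"
  unfolding sh_def by auto

lemma sh_inj: "inj (sh t w)"
  unfolding sh_def inj_def by (auto simp: fun_eq_iff)

lemma violation_hit:
  assumes w0: "w 0 \<ge> 1" and hc: "convex_fun_on (grid n d) h"
    and y: "y \<in> grid n d" "sh (-1) w y \<in> grid n d" "sh 1 w y \<in> grid n d" "bG d w k y = 0"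
  shows "Gf d w k y \<noteq> h y \<or> Gf d w k (sh (-1) w y) \<noteq> h (sh (-1) w y) \<or> Gf d w k (sh 1 w y) \<noteq> h (sh 1 w y)"
proof (rule ccontr)
  assume "\<not> ?thesis"
  then have e: "h y = Gf d w k y" "h (sh (-1) w y) = Gf d w k (sh (-1) w y)" "h (sh 1 w y) = Gf d w k (sh 1 w y)"
    by auto
  have b1: "bG d w k (sh (-1) w y) = 1" "bG d w k (sh 1 w y) = 1"
    using bG_sh[of w d k "-1" y, OF w0] bG_sh[of w d k 1 y, OF w0] y(4) by auto
  define xx where "xx = (\<lambda>i::nat. if i = 0 then sh (-1) w y else sh 1 w y)"
  define l where "l = (\<lambda>i::nat. 1/2::real)"
  have cc: "convex_comb 2 l xx = y"
    unfolding convex_comb_def xx_def l_def sh_def by (auto simp: fun_eq_iff numeral_2_eq_2 field_simps)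
  have p1: "\<forall>i<2. xx i \<in> grid n d" using y by (auto simp: xx_def numeral_2_eq_2 less_Suc_eq)
  have p2: "\<forall>i<2. 0 \<le> l i" by (simp add: l_def)
  have p3: "(\<Sum>i<2. l i) = 1" by (simp add: l_def)
  have p4: "convex_comb 2 l xx \<in> grid n d" by (simp only: cc y(1))
  have "h (convex_comb 2 l xx) \<le> (\<Sum>i<2. l i * h (xx i))"
    using hc p1 p2 p3 p4 unfolding convex_fun_on_def by blast
  then have "h y \<le> (\<Sum>i<2. l i * h (xx i))" by (simp only: cc)
  then have "h y \<le> (h (sh (-1) w y) + h (sh 1 w y)) / 2"
    by (simp add: l_def xx_def numeral_2_eq_2)
  then show False using e b1 y(4) unfolding Gf_def by (simp add: Psi_sh)
qed

lemma card_Cn_le: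
  fixes k :: "(nat \<times> nat \<Rightarrow> real) \<Rightarrow> nat"
  assumes w0: "w 0 \<ge> 1" and hc: "convex_fun_on (grid n d) h"
  defines "B \<equiv> {x \<in> grid n d. Gf d w k x \<noteq> h x}"
  defines "Cn \<equiv> {y \<in> grid n d. sh (-1) w y \<in> grid n d \<and> sh 1 w y \<in> grid n d \<and> bG d w k y = 0}"
  shows "card Cn \<le> 2 * card B"
proof -
  have fB: "finite B" unfolding B_def using finite_grid by auto
  define E0 where "E0 = {x. bG d w k x = 0}"
  define E1 where "E1 = {x. bG d w k x = 1}"
  have sub: "Cn \<subseteq> (B \<inter> E0) \<union> (sh 1 w ` (B \<inter> E1) \<union> sh (-1) w ` (B \<inter> E1))"
  proof
    fix y assume yC: "y \<in> Cn"
    then have y: "y \<in> grid n d" "sh (-1) w y \<in> grid n d" "sh 1 w y \<in> grid n d" "bG d w k y = 0"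
      unfolding Cn_def by auto
    have b1: "bG d w k (sh (-1) w y) = 1" "bG d w k (sh 1 w y) = 1"
      using bG_sh[of w d k "-1" y, OF w0] bG_sh[of w d k 1 y, OF w0] y(4) by auto
    have "y = sh 1 w (sh (-1) w y)" "y = sh (-1) w (sh 1 w y)" by (simp_all add: sh_sh sh_0)
    then show "y \<in> (B \<inter> E0) \<union> (sh 1 w ` (B \<inter> E1) \<union> sh (-1) w ` (B \<inter> E1))"
      using violation_hit[OF w0 hc y] y b1 unfolding B_def E0_def E1_def by blast
  qed
  have "card Cn \<le> card ((B \<inter> E0) \<union> (sh 1 w ` (B \<inter> E1) \<union> sh (-1) w ` (B \<inter> E1)))"
    using fB by (intro card_mono[OF _ sub]) auto
  also have "\<dots> \<le> card (B \<inter> E0) + (card (sh 1 w ` (B \<inter> E1)) + card (sh (-1) w ` (B \<inter> E1)))"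
    by (intro order.trans[OF card_Un_le] add_left_mono card_Un_le)
  also have "\<dots> \<le> card (B \<inter> E0) + (card (B \<inter> E1) + card (B \<inter> E1))"
    by (intro add_mono card_image_le) (use fB in auto)
  also have "card (B \<inter> E0) + card (B \<inter> E1) = card B"
  proof -
    have "B = (B \<inter> E0) \<union> (B \<inter> E1)" using bG_range unfolding E0_def E1_def by blast
    moreover have "(B \<inter> E0) \<inter> (B \<inter> E1) = {}" unfolding E0_def E1_def by auto
    ultimately show ?thesis using fB card_Un_disjoint[of "B \<inter> E0" "B \<inter> E1"] by (metis finite_Int)
  qed
  ultimately show ?thesis by linarith
qed

definition Iw :: "(nat \<Rightarrow> int) \<Rightarrow> nat \<Rightarrow> nat \<Rightarrow> nat set" where
  "Iw w n i = {t. t < n \<and> 0 \<le> int t - w i \<and> int t - w i < int n \<and> 0 \<le> int t + w i \<and> int t + w i < int n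
      \<and> 0 \<le> int t + 2 * w i \<and> int t + 2 * w i < int n}"

lemma card_Iw: assumes "3 * \<bar>w i\<bar> \<le> int n" shows "int (card (Iw w n i)) = int n - 3 * \<bar>w i\<bar>"
proof (cases "w i \<ge> 0")
  case True
  have "Iw w n i = {nat (w i)..<nat (int n - 2 * w i)}"
    unfolding Iw_def using True assms by auto
  then show ?thesis using True assms by simp
next
  case False
  have "Iw w n i = {nat (- 2 * w i)..<nat (int n + w i)}"
    unfolding Iw_def using False assms by auto
  then show ?thesis using False assms by simp
qed

definition Sw :: "nat \<Rightarrow> nat \<Rightarrow> (nat \<Rightarrow> int) \<Rightarrow> point set" where
  "Sw n d w = {y \<in> grid n d. sh (-1) w y \<in> grid n d \<and> sh 1 w y \<in> grid n d \<and> sh 2 w y \<in> grid n d}"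

lemma sh_grid_iff:
  assumes "\<forall>j\<ge>d. w j = 0" and f: "f \<in> PiE {..<d} (\<lambda>_. {..<n})"
  shows "sh s w (emb d f) \<in> grid n d \<longleftrightarrow> (\<forall>i<d. 0 \<le> int (f i) + s * w i \<and> int (f i) + s * w i < int n)"
proof -
  have "real (f i) + real_of_int s * real_of_int (w i) \<in> real ` {0..<n} \<longleftrightarrow>
     (0 \<le> int (f i) + s * w i \<and> int (f i) + s * w i < int n)" for i
  proof -
    have eq: "real (f i) + real_of_int s * real_of_int (w i) = real_of_int (int (f i) + s * w i)" by simp
    show ?thesis unfolding eq
    proof
      assume "real_of_int (int (f i) + s * w i) \<in> real ` {0..<n}"
      then obtain m where "m < n" "real_of_int (int (f i) + s * w i) = real m" by auto
      then have "int (f i) + s * w i = int m" by linarith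
      then show "0 \<le> int (f i) + s * w i \<and> int (f i) + s * w i < int n" using \<open>m < n\<close> by simp
    next
      assume h: "0 \<le> int (f i) + s * w i \<and> int (f i) + s * w i < int n"
      then have "real_of_int (int (f i) + s * w i) = real (nat (int (f i) + s * w i))" by simp
      moreover have "nat (int (f i) + s * w i) \<in> {0..<n}" using h by auto
      ultimately show "real_of_int (int (f i) + s * w i) \<in> real ` {0..<n}" by blast
    qed
  qed
  then show ?thesis using assms unfolding grid_def sh_def emb_def by auto
qed

lemma Sw_emb:
  assumes "\<forall>j\<ge>d. w j = 0"
  shows "Sw n d w = emb d ` PiE {..<d} (Iw w n)"
proof
  show "Sw n d w \<subseteq> emb d ` PiE {..<d} (Iw w n)"
  proof
    fix y assume y: "y \<in> Sw n d w"
    then obtain f where f: "f \<in> PiE {..<d} (\<lambda>_. {..<n})" and yf: "y = emb d f"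
      unfolding Sw_def grid_emb by auto
    have c: "sh (-1) w (emb d f) \<in> grid n d" "sh 1 w (emb d f) \<in> grid n d" "sh 2 w (emb d f) \<in> grid n d"
      using y yf unfolding Sw_def by auto
    have "f \<in> PiE {..<d} (Iw w n)"
      using f c[unfolded sh_grid_iff[OF assms f]] unfolding Iw_def by (auto simp: PiE_iff)
    then show "y \<in> emb d ` PiE {..<d} (Iw w n)" using yf by auto
  qed
  show "emb d ` PiE {..<d} (Iw w n) \<subseteq> Sw n d w"
  proof
    fix y assume "y \<in> emb d ` PiE {..<d} (Iw w n)"
    then obtain f where f: "f \<in> PiE {..<d} (Iw w n)" and yf: "y = emb d f" by auto
    have f': "f \<in> PiE {..<d} (\<lambda>_. {..<n})" using f unfolding Iw_def by (auto simp: PiE_iff)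
    have "y \<in> grid n d" using f' yf grid_emb by auto
    moreover have "sh s w y \<in> grid n d" if "s \<in> {-1,1,2}" for s
      unfolding yf sh_grid_iff[OF assms f'] using f that unfolding Iw_def by (auto simp: PiE_iff)
    ultimately show "y \<in> Sw n d w" unfolding Sw_def by auto
  qed
qed

lemma prod_ge_one_minus_sum:
  fixes a :: "nat \<Rightarrow> real"
  assumes "finite A" "\<And>i. i \<in> A \<Longrightarrow> 0 \<le> a i \<and> a i \<le> 1"
  shows "(\<Prod>i\<in>A. 1 - a i) \<ge> 1 - (\<Sum>i\<in>A. a i)"
  using assms
proof (induction A rule: finite_induct)
  case empty then show ?case by simp
next
  case (insert x F)
  have ih: "(\<Prod>i\<in>F. 1 - a i) \<ge> 1 - (\<Sum>i\<in>F. a i)" using insert by auto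
  have p0: "0 \<le> (\<Prod>i\<in>F. 1 - a i)" using insert by (intro prod_nonneg) auto
  have p1: "(\<Prod>i\<in>F. 1 - a i) \<le> 1" using insert by (intro prod_le_1) auto
  have ax: "0 \<le> a x" "a x \<le> 1" using insert by auto
  have "(\<Prod>i\<in>insert x F. 1 - a i) = (1 - a x) * (\<Prod>i\<in>F. 1 - a i)" using insert by simp
  also have "\<dots> \<ge> (1 - a x) * (1 - (\<Sum>i\<in>F. a i))" using ih ax by (intro mult_left_mono) auto
  finally have "(\<Prod>i\<in>insert x F. 1 - a i) \<ge> (1 - a x) * (1 - (\<Sum>i\<in>F. a i))" .
  moreover have "(1 - a x) * (1 - (\<Sum>i\<in>F. a i)) \<ge> 1 - a x - (\<Sum>i\<in>F. a i)"
  proof -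
    have "0 \<le> (\<Sum>i\<in>F. a i)" using insert by (intro sum_nonneg) auto
    then have "a x * (\<Sum>i\<in>F. a i) \<ge> 0" using ax by simp
    then show ?thesis by (simp add: algebra_simps)
  qed
  ultimately show ?case using insert by simp
qed

lemma card_Sw:
  assumes "\<forall>j\<ge>d. w j = 0" and small: "5 * (\<Sum>i<d. \<bar>w i\<bar>) \<le> int n" and n: "n \<ge> 1"
  shows "real (card (Sw n d w)) \<ge> (2/5) * real n ^ d"
proof -
  have wi: "3 * \<bar>w i\<bar> \<le> int n" if "i < d" for i
  proof -
    have "\<bar>w i\<bar> \<le> (\<Sum>i<d. \<bar>w i\<bar>)" using that by (intro member_le_sum) auto
    then show ?thesis using small by linarith
  qed
  have "real (card (Sw n d w)) = (\<Prod>i<d. real (card (Iw w n i)))"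
    unfolding Sw_emb[OF assms(1)] by (subst card_image[OF inj_emb]) (simp add: card_PiE)
  also have "\<dots> = (\<Prod>i<d. real n * (1 - 3 * real_of_int \<bar>w i\<bar> / real n))"
  proof (rule prod.cong[OF refl])
    fix i assume "i \<in> {..<d}"
    then have "int (card (Iw w n i)) = int n - 3 * \<bar>w i\<bar>" using card_Iw wi by auto
    then have "real (card (Iw w n i)) = real n - 3 * real_of_int \<bar>w i\<bar>"
      by (metis of_int_diff of_int_mult of_int_numeral of_int_of_nat_eq)
    moreover have "real n * (1 - 3 * real_of_int \<bar>w i\<bar> / real n) = real n - 3 * real_of_int \<bar>w i\<bar>"
      using n by (simp add: right_diff_distrib)
    ultimately show "real (card (Iw w n i)) = real n * (1 - 3 * real_of_int \<bar>w i\<bar> / real n)"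
      by simp
  qed
  also have "\<dots> = real n ^ d * (\<Prod>i<d. 1 - 3 * real_of_int \<bar>w i\<bar> / real n)"
    by (simp add: prod.distrib)
  also have "\<dots> \<ge> real n ^ d * (1 - (\<Sum>i<d. 3 * real_of_int \<bar>w i\<bar> / real n))"
  proof (intro mult_left_mono prod_ge_one_minus_sum)
    fix i assume "i \<in> {..<d}"
    then have "3 * real_of_int \<bar>w i\<bar> \<le> real n" using wi by (metis lessThan_iff of_int_le_iff of_int_mult of_int_numeral of_int_of_nat_eq)
    then show "0 \<le> 3 * real_of_int \<bar>w i\<bar> / real n \<and> 3 * real_of_int \<bar>w i\<bar> / real n \<le> 1"
      using n by (auto simp: field_simps)
  qed auto
  finally have A: "real (card (Sw n d w)) \<ge> real n ^ d * (1 - (\<Sum>i<d. 3 * real_of_int \<bar>w i\<bar> / real n))" .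
  have "(\<Sum>i<d. 3 * real_of_int \<bar>w i\<bar> / real n) = 3 * real_of_int (\<Sum>i<d. \<bar>w i\<bar>) / real n"
    by (simp add: sum_divide_distrib[symmetric] sum_distrib_left)
  also have "\<dots> \<le> 3/5"
  proof -
    have "5 * real_of_int (\<Sum>i<d. \<bar>w i\<bar>) \<le> real n" using small
      by (metis of_int_le_iff of_int_mult of_int_numeral of_int_of_nat_eq)
    then show ?thesis using n by (simp add: field_simps)
  qed
  finally have "1 - (\<Sum>i<d. 3 * real_of_int \<bar>w i\<bar> / real n) \<ge> 2/5" by simp
  then have "real n ^ d * (1 - (\<Sum>i<d. 3 * real_of_int \<bar>w i\<bar> / real n)) \<ge> real n ^ d * (2/5)"
    by (intro mult_left_mono) auto
  then show ?thesis using A by simp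
qed

lemma far_G:
  assumes w0: "w 0 \<ge> 1" and wd: "\<forall>j\<ge>d. w j = 0" and small: "5 * (\<Sum>i<d. \<bar>w i\<bar>) \<le> int n"
    and n: "n \<ge> 1" and eps: "\<epsilon> \<le> 1/10"
  shows "far_from_convex \<epsilon> (grid n d) (Gf d w k)"
  unfolding far_from_convex_def
proof (intro allI impI)
  fix h assume hc: "convex_fun_on (grid n d) h"
  define B where "B = {x \<in> grid n d. Gf d w k x \<noteq> h x}"
  define Cn where "Cn = {y \<in> grid n d. sh (-1) w y \<in> grid n d \<and> sh 1 w y \<in> grid n d \<and> bG d w k y = 0}"
  have c1: "card Cn \<le> 2 * card B" unfolding B_def Cn_def by (rule card_Cn_le[where w=w and k=k and n=n and d=d and h=h, OF w0 hc])
  have fC: "finite Cn" unfolding Cn_def using finite_grid by auto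
  have sub: "Sw n d w \<subseteq> Cn \<union> sh (-1) w ` Cn"
  proof
    fix y assume y: "y \<in> Sw n d w"
    show "y \<in> Cn \<union> sh (-1) w ` Cn"
    proof (cases "bG d w k y = 0")
      case True then show ?thesis using y unfolding Sw_def Cn_def by auto
    next
      case False
      then have "bG d w k y = 1" using bG_range by blast
      then have b: "bG d w k (sh 1 w y) = 0" using bG_sh[of w d k 1 y, OF w0] by simp
      have "sh (-1) w (sh 1 w y) = y" "sh 1 w (sh 1 w y) = sh 2 w y" by (simp_all add: sh_sh sh_0)
      then have "sh 1 w y \<in> Cn" using y b unfolding Sw_def Cn_def by auto
      moreover have "y = sh (-1) w (sh 1 w y)" by (simp add: sh_sh sh_0)
      ultimately show ?thesis by blast
    qed
  qed
  have "card (Sw n d w) \<le> card (Cn \<union> sh (-1) w ` Cn)" using fC by (intro card_mono[OF _ sub]) auto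
  also have "\<dots> \<le> card Cn + card (sh (-1) w ` Cn)" by (rule card_Un_le)
  also have "\<dots> \<le> 2 * card Cn" using card_image_le[OF fC, of "sh (-1) w"] by simp
  finally have "card (Sw n d w) \<le> 4 * card B" using c1 by linarith
  then have "(2/5) * real n ^ d \<le> 4 * real (card B)"
    using card_Sw[OF wd small n] by (metis of_nat_le_iff of_nat_mult of_nat_numeral order.trans)
  then have "real (card B) \<ge> (1/10) * real (card (grid n d))" by (simp add: card_grid)
  moreover have "\<epsilon> * real (card (grid n d)) \<le> (1/10) * real (card (grid n d))"
    using eps by (intro mult_right_mono) auto
  ultimately show "\<epsilon> * real (card (grid n d)) \<le> real (card {x \<in> grid n d. Gf d w k x \<noteq> h x})"
    unfolding B_def by linarith
qed

definition Kset :: "nat \<Rightarrow> nat \<Rightarrow> (nat \<Rightarrow> int) \<Rightarrow> ((nat \<times> nat \<Rightarrow> real) \<Rightarrow> nat) set" where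
  "Kset n d w = PiE (piw d w ` grid n d) (\<lambda>_. {0, 1})"

lemma finite_Kset: "finite (Kset n d w)"
  unfolding Kset_def using finite_grid by (intro finite_PiE) auto

lemma Kset_ne: "Kset n d w \<noteq> {}"
  unfolding Kset_def by (simp add: PiE_eq_empty_iff)

lemma Kset_le1: "k \<in> Kset n d w \<Longrightarrow> x \<in> grid n d \<Longrightarrow> k (piw d w x) \<le> 1"
  unfolding Kset_def by (auto simp: PiE_iff)

lemma indist:
  assumes Qg: "set Q \<subseteq> grid n d" and inj: "inj_on (piw d w) (set Q)"
  shows "(\<Sum>k\<in>Kset n d w. D (map (Gf d w k) Q)) = (\<Sum>k\<in>Kset n d w. D (map (Ff d w k) Q))"
proof -
  define P where "P = piw d w ` grid n d"
  define Od where "Od = piw d w ` {x \<in> set Q. odd (tau w x)}"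
  define \<sigma> where "\<sigma> = (\<lambda>k::(nat \<times> nat \<Rightarrow> real) \<Rightarrow> nat. \<lambda>p. if p \<in> P then (if p \<in> Od then 1 - k p else k p) else undefined)"
  have K: "Kset n d w = PiE P (\<lambda>_. {0,1})" unfolding Kset_def P_def ..
  have inK: "\<sigma> k \<in> Kset n d w" if k: "k \<in> Kset n d w" for k
    unfolding K
  proof (rule PiE_I)
    fix p assume p: "p \<in> P"
    have "k p \<in> {0,1}" using PiE_mem[OF k[unfolded K] p] .
    then show "\<sigma> k p \<in> {0,1}" using p unfolding \<sigma>_def by auto
  next
    fix p assume "p \<notin> P" then show "\<sigma> k p = undefined" unfolding \<sigma>_def by simp
  qed
  have inv: "\<sigma> (\<sigma> k) = k" if "k \<in> Kset n d w" for k
  proof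
    fix p show "\<sigma> (\<sigma> k) p = k p"
    proof (cases "p \<in> P")
      case True
      have "k p \<in> {0,1}" using PiE_mem[OF that[unfolded K] True] .
      then show ?thesis using True unfolding \<sigma>_def by auto
    next
      case False
      then show ?thesis using PiE_arb[OF that[unfolded K] False] unfolding \<sigma>_def by simp
    qed
  qed
  have bij: "bij_betw \<sigma> (Kset n d w) (Kset n d w)"
    by (rule bij_betwI[where g=\<sigma>]) (use inK inv in auto)
  have mapeq: "map (Ff d w (\<sigma> k)) Q = map (Gf d w k) Q" if k: "k \<in> Kset n d w" for k
  proof (rule map_cong[OF refl])
    fix x assume x: "x \<in> set Q"
    have xP: "piw d w x \<in> P" using x Qg unfolding P_def by auto
    have kx: "k (piw d w x) \<in> {0,1}" using k xP unfolding K by auto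
    have kx': "k (piw d w x) = 0 \<or> k (piw d w x) = 1" using kx by simp
    have Oiff: "piw d w x \<in> Od \<longleftrightarrow> odd (tau w x)"
    proof
      assume "piw d w x \<in> Od"
      then obtain x' where x'1: "x' \<in> {x \<in> set Q. odd (tau w x)}" and x'2: "piw d w x = piw d w x'"
        unfolding Od_def by (rule imageE)
      have "x = x'" using inj_onD[OF inj x'2 x] x'1 by simp
      then show "odd (tau w x)" using x'1 by simp
    next
      assume "odd (tau w x)"
      then have "x \<in> {x \<in> set Q. odd (tau w x)}" using x by simp
      then show "piw d w x \<in> Od" unfolding Od_def by (rule imageI)
    qed
    show "Ff d w (\<sigma> k) x = Gf d w k x"
    proof (cases "odd (tau w x)")
      case True
      then have "\<sigma> k (piw d w x) = 1 - k (piw d w x)" using xP Oiff unfolding \<sigma>_def by auto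
      moreover have "bG d w k x = 1 - int (k (piw d w x))"
        using kx' True unfolding bG_def by presburger
      ultimately show ?thesis using kx unfolding Ff_def Gf_def by auto
    next
      case False
      then have "\<sigma> k (piw d w x) = k (piw d w x)" using xP Oiff unfolding \<sigma>_def by auto
      moreover have "bG d w k x = int (k (piw d w x))"
        using kx' False unfolding bG_def by presburger
      ultimately show ?thesis using kx unfolding Ff_def Gf_def by auto
    qed
  qed
  have "(\<Sum>k\<in>Kset n d w. D (map (Gf d w k) Q)) = (\<Sum>k\<in>Kset n d w. D (map (Ff d w (\<sigma> k)) Q))"
  proof (rule sum.cong[OF refl])
    fix k assume "k \<in> Kset n d w"
    then show "D (map (Gf d w k) Q) = D (map (Ff d w (\<sigma> k)) Q)" by (simp only: mapeq)
  qed
  also have "\<dots> = (\<Sum>k\<in>Kset n d w. D (map (Ff d w k) Q))"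
    using sum.reindex_bij_betw[OF bij, of "\<lambda>k. D (map (Ff d w k) Q)"] .
  finally show ?thesis .
qed

definition prim :: "nat \<Rightarrow> (nat \<Rightarrow> int) \<Rightarrow> bool" where
  "prim d w \<longleftrightarrow> (\<forall>g::int. g > 1 \<longrightarrow> \<not> (\<forall>j<d. g dvd w j))"

definition goodw :: "nat \<Rightarrow> (nat \<Rightarrow> int) \<Rightarrow> bool" where
  "goodw d w \<longleftrightarrow> (\<forall>j\<ge>d. w j = 0) \<and> w 0 \<ge> 1 \<and> prim d w"

lemma prim_unique:
  assumes w: "goodw d w" and w': "goodw d w'" and d: "d > 0"
    and par: "\<And>j. j < d \<Longrightarrow> w 0 * w' j = w' 0 * w j"
  shows "w = w'"
proof -
  define g where "g = gcd (w 0) (w' 0)"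
  have g0: "g > 0" unfolding g_def using w unfolding goodw_def by auto
  define \<alpha> where "\<alpha> = w 0 div g"
  define \<beta> where "\<beta> = w' 0 div g"
  have wa: "w 0 = g * \<alpha>" unfolding \<alpha>_def g_def by simp
  have wb: "w' 0 = g * \<beta>" unfolding \<beta>_def g_def by simp
  have cop: "coprime \<alpha> \<beta>" unfolding \<alpha>_def \<beta>_def g_def
    using w unfolding goodw_def by (intro div_gcd_coprime) auto
  have a1: "\<alpha> \<ge> 1" using wa g0 w unfolding goodw_def
    by (metis int_one_le_iff_zero_less zero_less_mult_pos order_less_le_trans zero_less_one)
  have b1: "\<beta> \<ge> 1" using wb g0 w' unfolding goodw_def
    by (metis int_one_le_iff_zero_less zero_less_mult_pos order_less_le_trans zero_less_one)
  have eq: "\<alpha> * w' j = \<beta> * w j" if "j < d" for j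
  proof -
    have "g * (\<alpha> * w' j) = g * (\<beta> * w j)" using par[OF that] wa wb by (simp add: mult.assoc)
    then show ?thesis using g0 by simp
  qed
  have "\<alpha> dvd w j" if "j < d" for j
  proof -
    have "\<alpha> dvd \<beta> * w j" using eq[OF that] by (metis dvd_triv_left)
    then show ?thesis using cop by (simp add: coprime_dvd_mult_right_iff)
  qed
  then have "\<alpha> = 1" using w a1 unfolding goodw_def prim_def by force
  have "\<beta> dvd w' j" if "j < d" for j
  proof -
    have "\<beta> dvd \<alpha> * w' j" using eq[OF that] by (metis dvd_triv_left)
    then show ?thesis using cop by (simp add: coprime_dvd_mult_right_iff coprime_commute)
  qed
  then have "\<beta> = 1" using w' b1 unfolding goodw_def prim_def by force
  show "w = w'"
  proof
    fix j show "w j = w' j"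
    proof (cases "j < d")
      case True then show ?thesis using eq[OF True] \<open>\<alpha> = 1\<close> \<open>\<beta> = 1\<close> by simp
    next
      case False then show ?thesis using w w' unfolding goodw_def by auto
    qed
  qed
qed

lemma pair_det:
  assumes a: "a \<in> grid n d" and b: "b \<in> grid n d" and ab: "a \<noteq> b"
    and w: "goodw d w" and w': "goodw d w'"
    and e: "piw d w a = piw d w b" and e': "piw d w' a = piw d w' b"
  shows "w = w'"
proof -
  define z where "z = (\<lambda>i. a i - b i)"
  have rel: "z i * real_of_int (u j) = z j * real_of_int (u i)"
    if "i < d" "j < d" "piw d u a = piw d u b" for i j u
  proof -
    have "Lf u a i j = Lf u b i j" using fun_cong[OF that(3), of "(i,j)"] that(1,2) unfolding piw_def by auto
    then show ?thesis unfolding z_def Lf_def by (simp add: algebra_simps)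
  qed
  obtain i0 where i0: "i0 < d" "z i0 \<noteq> 0"
  proof -
    obtain i where "a i \<noteq> b i" using ab by (auto simp: fun_eq_iff)
    moreover have "i < d" using calculation a b unfolding grid_def by (cases "i < d") auto
    ultimately show ?thesis using that unfolding z_def by auto
  qed
  have d: "d > 0" using i0 by auto
  have "w 0 * w' j = w' 0 * w j" if j: "j < d" for j
  proof -
    have r1: "z i0 * real_of_int (w 0) = z 0 * real_of_int (w i0)" using rel[OF i0(1) d e] .
    have r2: "z i0 * real_of_int (w' j) = z j * real_of_int (w' i0)" using rel[OF i0(1) j e'] .
    have r3: "z i0 * real_of_int (w' 0) = z 0 * real_of_int (w' i0)" using rel[OF i0(1) d e'] .
    have r4: "z i0 * real_of_int (w j) = z j * real_of_int (w i0)" using rel[OF i0(1) j e] .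
    have "(z i0 * z i0) * (real_of_int (w 0) * real_of_int (w' j)) = (z i0 * real_of_int (w 0)) * (z i0 * real_of_int (w' j))"
      by (simp add: algebra_simps)
    also have "\<dots> = (z 0 * real_of_int (w i0)) * (z j * real_of_int (w' i0))" using r1 r2 by simp
    also have "\<dots> = (z 0 * real_of_int (w' i0)) * (z j * real_of_int (w i0))" by (simp add: algebra_simps)
    also have "\<dots> = (z i0 * real_of_int (w' 0)) * (z i0 * real_of_int (w j))" using r3 r4 by simp
    also have "\<dots> = (z i0 * z i0) * (real_of_int (w' 0) * real_of_int (w j))" by (simp add: algebra_simps)
    finally have "real_of_int (w 0) * real_of_int (w' j) = real_of_int (w' 0) * real_of_int (w j)"
      using i0(2) by simp
    then show ?thesis by (metis of_int_eq_iff of_int_mult)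
  qed
  then show ?thesis using prim_unique[OF w w' d] by blast
qed

lemma bad_count:
  assumes W: "finite W" "\<And>w. w \<in> W \<Longrightarrow> goodw d w" and Qg: "set Q \<subseteq> grid n d"
  shows "card {w \<in> W. \<not> inj_on (piw d w) (set Q)} \<le> length Q ^ 2"
proof -
  define bad where "bad = {w \<in> W. \<not> inj_on (piw d w) (set Q)}"
  define f where "f = (\<lambda>w. SOME p. p \<in> set Q \<times> set Q \<and> fst p \<noteq> snd p \<and> piw d w (fst p) = piw d w (snd p))"
  have fp: "f w \<in> set Q \<times> set Q \<and> fst (f w) \<noteq> snd (f w) \<and> piw d w (fst (f w)) = piw d w (snd (f w))"
    if "w \<in> bad" for w
  proof -
    have "\<exists>p. p \<in> set Q \<times> set Q \<and> fst p \<noteq> snd p \<and> piw d w (fst p) = piw d w (snd p)"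
      using that unfolding bad_def inj_on_def by auto
    then show ?thesis unfolding f_def by (rule someI_ex)
  qed
  have "inj_on f bad"
  proof (rule inj_onI)
    fix w w' assume ww: "w \<in> bad" "w' \<in> bad" "f w = f w'"
    have p1: "fst (f w) \<in> set Q" "snd (f w) \<in> set Q" "fst (f w) \<noteq> snd (f w)"
      "piw d w (fst (f w)) = piw d w (snd (f w))" using fp[OF ww(1)] by auto
    have p2: "piw d w' (fst (f w)) = piw d w' (snd (f w))" using fp[OF ww(2)] ww(3) by simp
    have g: "goodw d w" "goodw d w'" using ww(1,2) W(2) unfolding bad_def by auto
    show "w = w'"
      by (rule pair_det[OF _ _ p1(3) g p1(4) p2]) (use p1 Qg in auto)
  qed
  then have "card bad = card (f ` bad)" by (simp add: card_image)
  also have "\<dots> \<le> card (set Q \<times> set Q)" using fp by (intro card_mono) (auto simp: image_subset_iff)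
  also have "\<dots> = card (set Q) ^ 2" by (simp add: card_cartesian_product power2_eq_square)
  also have "\<dots> \<le> length Q ^ 2" by (simp add: card_length power_mono)
  finally show ?thesis unfolding bad_def .
qed

lemma acc_eq: "accept_prob T f = measure_pmf.expectation T (\<lambda>t. snd t (map f (fst t)))"
  unfolding accept_prob_def by (simp add: case_prod_unfold)

lemma acc_integrable:
  assumes "\<forall>t\<in>set_pmf T. \<forall>v. 0 \<le> snd t v \<and> snd t v \<le> (1::real)"
  shows "integrable (measure_pmf T) (\<lambda>t. snd t (map (f::'a \<Rightarrow> 'b) (fst t)))"
  using assms by (auto intro!: measure_pmf.integrable_const_bound[where B=1] AE_pmfI)

lemma yao_bound:
  assumes W: "finite W" "W \<noteq> {}" "\<And>w. w \<in> W \<Longrightarrow> goodw d w \<and> 5 * (\<Sum>i<d. \<bar>w i\<bar>) \<le> int n"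
    and n: "n \<ge> 1" and eps: "\<epsilon> \<le> 1/10"
    and T: "nonadaptive_tester \<epsilon> (grid n d) T" and qb: "query_bound T q"
  shows "real (card W) \<le> 3 * real q ^ 2"
proof -
  have supp: "\<forall>t\<in>set_pmf T. set (fst t) \<subseteq> grid n d \<and> (\<forall>v. 0 \<le> snd t v \<and> snd t v \<le> 1)"
    and accF: "\<And>f. convex_fun_on (grid n d) f \<Longrightarrow> accept_prob T f \<ge> 2/3"
    and accG: "\<And>f. far_from_convex \<epsilon> (grid n d) f \<Longrightarrow> 1 - accept_prob T f \<ge> 2/3"
    using T unfolding nonadaptive_tester_def by auto
  have bnd: "\<forall>t\<in>set_pmf T. \<forall>v. 0 \<le> snd t v \<and> snd t v \<le> 1" using supp by auto
  note int = acc_integrable[OF bnd]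
  define K where "K = (\<lambda>w. Kset n d w)"
  define \<phi> where "\<phi> = (\<lambda>w t. (\<Sum>k\<in>K w. snd t (map (Ff d w k) (fst t)) - snd t (map (Gf d w k) (fst t))) / real (card (K w)))"
  have cK: "real (card (K w)) > 0" for w unfolding K_def using finite_Kset Kset_ne
    by (simp add: card_gt_0_iff)
  have intphi: "integrable (measure_pmf T) (\<phi> w)" for w
    unfolding \<phi>_def by (intro Bochner_Integration.integrable_divide_zero Bochner_Integration.integrable_sum Bochner_Integration.integrable_diff int)
  have phi_int: "measure_pmf.expectation T (\<phi> w) =
      (\<Sum>k\<in>K w. accept_prob T (Ff d w k) - accept_prob T (Gf d w k)) / real (card (K w))" for w
    unfolding \<phi>_def acc_eq
    by (subst integral_divide_zero, subst Bochner_Integration.integral_sum, (intro Bochner_Integration.integrable_diff int)?, subst Bochner_Integration.integral_diff) (auto intro: int)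
  have lower: "measure_pmf.expectation T (\<phi> w) \<ge> 1/3" if w: "w \<in> W" for w
  proof -
    have gw: "goodw d w" "5 * (\<Sum>i<d. \<bar>w i\<bar>) \<le> int n" using W(3)[OF w] by auto
    have "accept_prob T (Ff d w k) - accept_prob T (Gf d w k) \<ge> 1/3" if k: "k \<in> K w" for k
    proof -
      have "convex_fun_on (grid n d) (Ff d w k)"
        using k unfolding K_def by (intro convex_F Kset_le1) auto
      moreover have "far_from_convex \<epsilon> (grid n d) (Gf d w k)"
        using gw n eps unfolding goodw_def by (intro far_G) auto
      ultimately show ?thesis using accF accG by fastforce
    qed
    then have "(\<Sum>k\<in>K w. accept_prob T (Ff d w k) - accept_prob T (Gf d w k)) \<ge> (\<Sum>k\<in>K w. 1/3)"
      by (intro sum_mono) auto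
    then have "(\<Sum>k\<in>K w. accept_prob T (Ff d w k) - accept_prob T (Gf d w k)) \<ge> real (card (K w)) / 3"
      by simp
    then show ?thesis unfolding phi_int using cK[of w] by (simp add: field_simps)
  qed
  have upper_pt: "\<phi> w t \<le> (if inj_on (piw d w) (set (fst t)) then 0 else 1)"
    if t: "t \<in> set_pmf T" for w t
  proof (cases "inj_on (piw d w) (set (fst t))")
    case True
    have "(\<Sum>k\<in>K w. snd t (map (Ff d w k) (fst t)) - snd t (map (Gf d w k) (fst t))) = 0"
      using indist[of "fst t" n d w "snd t"] True supp t unfolding K_def by (simp add: sum_subtractf)
    then show ?thesis unfolding \<phi>_def using True by simp
  next
    case False
    have "(\<Sum>k\<in>K w. snd t (map (Ff d w k) (fst t)) - snd t (map (Gf d w k) (fst t))) \<le> (\<Sum>k\<in>K w. 1)"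
      using bnd t by (intro sum_mono) (smt (verit))
    then show ?thesis unfolding \<phi>_def using False cK[of w] by (simp add: field_simps)
  qed
  define \<Phi> where "\<Phi> = (\<lambda>t. \<Sum>w\<in>W. \<phi> w t)"
  have "real (card W) / 3 = (\<Sum>w\<in>W. 1/3)" by simp
  also have "\<dots> \<le> (\<Sum>w\<in>W. measure_pmf.expectation T (\<phi> w))" using lower by (intro sum_mono) auto
  also have "\<dots> = measure_pmf.expectation T \<Phi>" unfolding \<Phi>_def by (subst Bochner_Integration.integral_sum) (auto intro: intphi)
  also have "\<dots> \<le> measure_pmf.expectation T (\<lambda>_. real q ^ 2)"
  proof (rule integral_mono_AE)
    show "integrable (measure_pmf T) \<Phi>" unfolding \<Phi>_def by (intro Bochner_Integration.integrable_sum intphi)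
    show "integrable (measure_pmf T) (\<lambda>_. real q ^ 2)" by simp
    show "AE t in measure_pmf T. \<Phi> t \<le> real q ^ 2"
    proof (rule AE_pmfI)
      fix t assume t: "t \<in> set_pmf T"
      have "\<Phi> t \<le> (\<Sum>w\<in>W. if inj_on (piw d w) (set (fst t)) then 0 else 1)"
        unfolding \<Phi>_def using upper_pt[OF t] by (intro sum_mono) auto
      also have "\<dots> = (\<Sum>w\<in>W. if \<not> inj_on (piw d w) (set (fst t)) then 1 else 0)"
        by (intro sum.cong) auto
      also have "\<dots> = real (card {w \<in> W. \<not> inj_on (piw d w) (set (fst t))})"
        using W(1) by (simp add: sum.inter_filter[symmetric])
      also have "\<dots> \<le> real (length (fst t) ^ 2)"
        using bad_count[of W d "fst t" n] W supp t by (simp del: of_nat_power)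
      also have "\<dots> \<le> real q ^ 2" using qb t unfolding query_bound_def by (simp add: power_mono)
      finally show "\<Phi> t \<le> real q ^ 2" .
    qed
  qed
  also have "\<dots> = real q ^ 2" by simp
  finally show ?thesis by simp
qed

lemma pow_step_up:
  fixes t :: real assumes "t \<ge> 0"
  shows "t^(Suc d) + real (Suc d) * t^d \<le> (t + 1)^(Suc d)"
proof (cases "t = 0")
  case True then show ?thesis by (cases d) auto
next
  case False
  then have tp: "t > 0" using assms by auto
  have "1 + real (Suc d) * (1/t) \<le> (1 + 1/t)^(Suc d)"
    using tp by (intro Bernoulli_inequality) (simp add: le_divide_eq)
  then have "t^(Suc d) * (1 + real (Suc d) * (1/t)) \<le> t^(Suc d) * (1 + 1/t)^(Suc d)"
    using tp by (intro mult_left_mono) auto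
  also have "t^(Suc d) * (1 + 1/t)^(Suc d) = (t + 1)^(Suc d)"
    using tp by (simp add: power_mult_distrib[symmetric] field_simps)
  also have "t^(Suc d) * (1 + real (Suc d) * (1/t)) = t^(Suc d) + real (Suc d) * t^d"
    using tp by (simp add: field_simps)
  finally show ?thesis .
qed

lemma pow_step_down:
  fixes t :: real assumes "t \<ge> 1"
  shows "t^(Suc d) \<le> (t - 1)^(Suc d) + real (Suc d) * t^d"
proof -
  have tp: "t > 0" using assms by auto
  have "1 + real (Suc d) * (-1/t) \<le> (1 + (-1/t))^(Suc d)"
    using assms by (intro Bernoulli_inequality) (auto simp: field_simps)
  then have "t^(Suc d) * (1 + real (Suc d) * (-1/t)) \<le> t^(Suc d) * (1 + (-1/t))^(Suc d)"
    using tp by (intro mult_left_mono) auto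
  also have "t^(Suc d) * (1 + (-1/t))^(Suc d) = (t - 1)^(Suc d)"
    using tp by (simp add: power_mult_distrib[symmetric] field_simps)
  also have "t^(Suc d) * (1 + real (Suc d) * (-1/t)) = t^(Suc d) - real (Suc d) * t^d"
    using tp by (simp add: field_simps)
  finally show ?thesis by simp
qed

lemma powsum_upper: "(\<Sum>i<M. real i ^ d) \<le> real M ^ Suc d / real (Suc d)"
proof (induction M)
  case 0 then show ?case by simp
next
  case (Suc M)
  have "(\<Sum>i<Suc M. real i ^ d) = (\<Sum>i<M. real i ^ d) + real M ^ d" by simp
  also have "\<dots> \<le> real M ^ Suc d / real (Suc d) + real M ^ d" using Suc by simp
  also have "\<dots> = (real M ^ Suc d + real (Suc d) * real M ^ d) / real (Suc d)"
    by (simp add: field_simps)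
  also have "\<dots> \<le> (real M + 1) ^ Suc d / real (Suc d)"
    by (intro divide_right_mono pow_step_up) auto
  finally show ?case by (simp add: add.commute)
qed

lemma powsum_lower: "(\<Sum>i<M. real (i - d) ^ d) \<ge> real (M - Suc d) ^ Suc d / real (Suc d)"
proof (induction M)
  case 0 then show ?case by simp
next
  case (Suc M)
  have "(\<Sum>i<Suc M. real (i - d) ^ d) = (\<Sum>i<M. real (i - d) ^ d) + real (M - d) ^ d" by simp
  also have "\<dots> \<ge> real (M - Suc d) ^ Suc d / real (Suc d) + real (M - d) ^ d" using Suc by simp
  finally have A: "(\<Sum>i<Suc M. real (i - d) ^ d) \<ge> real (M - Suc d) ^ Suc d / real (Suc d) + real (M - d) ^ d" .
  have "real (M - d) ^ Suc d \<le> real (M - Suc d) ^ Suc d + real (Suc d) * real (M - d) ^ d"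
  proof (cases "M \<ge> Suc d")
    case True
    have e: "real (M - Suc d) = real (M - d) - 1" using True by simp
    have t1: "real (M - d) \<ge> 1" using True by simp
    show ?thesis unfolding e using pow_step_down[OF t1] .
  next
    case False
    then have "M - d = 0 \<or> M - d = 1 \<and> M - Suc d = 0" by auto
    then show ?thesis by auto
  qed
  then have "real (M - d) ^ Suc d / real (Suc d) \<le> (real (M - Suc d) ^ Suc d + real (Suc d) * real (M - d) ^ d) / real (Suc d)"
    by (rule divide_right_mono) auto
  also have "\<dots> = real (M - Suc d) ^ Suc d / real (Suc d) + real (M - d) ^ d"
    by (simp add: add_divide_distrib)
  finally have "real (Suc M - Suc d) ^ Suc d / real (Suc d) \<le> real (M - Suc d) ^ Suc d / real (Suc d) + real (M - d) ^ d"
    by simp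
  then show ?case using A by linarith
qed

definition VL :: "nat \<Rightarrow> nat \<Rightarrow> int list set" where
  "VL d M = {xs. length xs = d \<and> (\<forall>x\<in>set xs. x \<noteq> 0) \<and> sum_list (map (\<lambda>x. nat \<bar>x\<bar>) xs) \<le> M}"

lemma finite_VL: "finite (VL d M)"
proof -
  have "VL d M \<subseteq> {xs. set xs \<subseteq> {- int M..int M} \<and> length xs = d}"
  proof
    fix xs assume xs: "xs \<in> VL d M"
    have "\<bar>x\<bar> \<le> int M" if "x \<in> set xs" for x
    proof -
      have "nat \<bar>x\<bar> \<le> sum_list (map (\<lambda>x. nat \<bar>x\<bar>) xs)"
        using that by (intro member_le_sum_list) auto
      then show ?thesis using xs unfolding VL_def by auto
    qed
    then have "set xs \<subseteq> {- int M..int M}" by (force simp: abs_le_iff)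
    then show "xs \<in> {xs. set xs \<subseteq> {- int M..int M} \<and> length xs = d}" using xs unfolding VL_def
      by auto
  qed
  moreover have "finite {xs. set xs \<subseteq> {- int M..int M} \<and> length xs = d}"
    by (intro finite_lists_length_eq) auto
  ultimately show ?thesis by (rule finite_subset)
qed

lemma VL_0: "VL 0 M = {[]}" unfolding VL_def by auto

lemma VL_Suc: "VL (Suc d) M = (\<Union>i<M. (\<lambda>ys. int (M - i) # ys) ` VL d i \<union> (\<lambda>ys. - int (M - i) # ys) ` VL d i)"
proof
  show "VL (Suc d) M \<subseteq> (\<Union>i<M. (\<lambda>ys. int (M - i) # ys) ` VL d i \<union> (\<lambda>ys. - int (M - i) # ys) ` VL d i)"
  proof
    fix xs assume xs: "xs \<in> VL (Suc d) M"
    then obtain x ys where e: "xs = x # ys" unfolding VL_def by (cases xs) auto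
    have x0: "x \<noteq> 0" and ys0: "\<forall>y\<in>set ys. y \<noteq> 0" and len: "length ys = d"
      and sm: "nat \<bar>x\<bar> + sum_list (map (\<lambda>x. nat \<bar>x\<bar>) ys) \<le> M"
      using xs e unfolding VL_def by auto
    define i where "i = M - nat \<bar>x\<bar>"
    have iM: "i < M" using x0 sm unfolding i_def by auto
    have ys: "ys \<in> VL d i" using ys0 len sm unfolding VL_def i_def by auto
    have "int (M - i) = \<bar>x\<bar>" using sm unfolding i_def by auto
    then have "x = int (M - i) \<or> x = - int (M - i)" by auto
    then show "xs \<in> (\<Union>i<M. (\<lambda>ys. int (M - i) # ys) ` VL d i \<union> (\<lambda>ys. - int (M - i) # ys) ` VL d i)"
      using iM ys e by blast
  qed
  show "(\<Union>i<M. (\<lambda>ys. int (M - i) # ys) ` VL d i \<union> (\<lambda>ys. - int (M - i) # ys) ` VL d i) \<subseteq> VL (Suc d) M"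
    unfolding VL_def by auto
qed

lemma card_VL_Suc: "card (VL (Suc d) M) = (\<Sum>i<M. 2 * card (VL d i))"
proof -
  define A where "A = (\<lambda>i. (\<lambda>ys. int (M - i) # ys) ` VL d i \<union> (\<lambda>ys. - int (M - i) # ys) ` VL d i)"
  have cA: "card (A i) = 2 * card (VL d i)" if "i < M" for i
  proof -
    have "card (A i) = card ((\<lambda>ys. int (M - i) # ys) ` VL d i) + card ((\<lambda>ys. - int (M - i) # ys) ` VL d i)"
      unfolding A_def using that by (intro card_Un_disjoint) (auto simp: finite_VL)
    also have "\<dots> = card (VL d i) + card (VL d i)"
      by (subst card_image, simp add: inj_on_def)+ simp
    finally show ?thesis by simp
  qed
  have "card (VL (Suc d) M) = card (\<Union>i<M. A i)" unfolding VL_Suc A_def ..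
  also have "\<dots> = (\<Sum>i<M. card (A i))"
  proof (rule card_UN_disjoint)
    show "\<forall>i\<in>{..<M}. finite (A i)" unfolding A_def by (auto simp: finite_VL)
    show "\<forall>i\<in>{..<M}. \<forall>j\<in>{..<M}. i \<noteq> j \<longrightarrow> A i \<inter> A j = {}"
      unfolding A_def by auto
  qed simp
  also have "\<dots> = (\<Sum>i<M. 2 * card (VL d i))" using cA by simp
  finally show ?thesis .
qed

lemma card_VL_upper: "real (card (VL d M)) \<le> 2^d * real M ^ d / fact d"
proof (induction d arbitrary: M)
  case 0 then show ?case by (simp add: VL_0)
next
  case (Suc d)
  have "real (card (VL (Suc d) M)) = (\<Sum>i<M. 2 * real (card (VL d i)))"
    unfolding card_VL_Suc by simp
  also have "\<dots> \<le> (\<Sum>i<M. 2 * (2^d * real i ^ d / fact d))"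
    by (intro sum_mono mult_left_mono Suc.IH) auto
  also have "\<dots> = 2 * 2^d / fact d * (\<Sum>i<M. real i ^ d)"
    by (simp add: sum_distrib_left mult.assoc)
  also have "\<dots> \<le> 2 * 2^d / fact d * (real M ^ Suc d / real (Suc d))"
    by (intro mult_left_mono powsum_upper) auto
  also have "\<dots> = 2 ^ Suc d * real M ^ Suc d / fact (Suc d)"
    by (simp add: field_simps)
  finally show ?case .
qed

lemma card_VL_lower: "real (card (VL d M)) \<ge> 2^d * real (M - d) ^ d / fact d"
proof (induction d arbitrary: M)
  case 0 then show ?case by (simp add: VL_0)
next
  case (Suc d)
  have "2 ^ Suc d * real (M - Suc d) ^ Suc d / fact (Suc d) = 2 * 2^d / fact d * (real (M - Suc d) ^ Suc d / real (Suc d))"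
    by (simp add: field_simps)
  also have "\<dots> \<le> 2 * 2^d / fact d * (\<Sum>i<M. real (i - d) ^ d)"
    by (intro mult_left_mono powsum_lower) auto
  also have "\<dots> = (\<Sum>i<M. 2 * (2^d * real (i - d) ^ d / fact d))"
    by (simp add: sum_distrib_left mult.assoc)
  also have "\<dots> \<le> (\<Sum>i<M. 2 * real (card (VL d i)))"
    by (intro sum_mono mult_left_mono Suc.IH) auto
  also have "\<dots> = real (card (VL (Suc d) M))"
    unfolding card_VL_Suc by simp
  finally show ?case .
qed

definition VP :: "nat \<Rightarrow> nat \<Rightarrow> int list set" where
  "VP d M = {xs \<in> VL d M. xs \<noteq> [] \<and> hd xs \<ge> 1}"

lemma finite_VP: "finite (VP d M)" unfolding VP_def using finite_VL by auto

lemma VP_Suc: "VP (Suc d) M = (\<Union>i<M. (\<lambda>ys. int (M - i) # ys) ` VL d i)"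
proof
  show "VP (Suc d) M \<subseteq> (\<Union>i<M. (\<lambda>ys. int (M - i) # ys) ` VL d i)"
  proof
    fix xs assume xs: "xs \<in> VP (Suc d) M"
    then have "xs \<in> VL (Suc d) M" unfolding VP_def by auto
    then obtain i where i: "i < M" and "xs \<in> (\<lambda>ys. int (M - i) # ys) ` VL d i \<union> (\<lambda>ys. - int (M - i) # ys) ` VL d i"
      unfolding VL_Suc by auto
    moreover have "hd xs \<ge> 1" using xs unfolding VP_def by auto
    ultimately show "xs \<in> (\<Union>i<M. (\<lambda>ys. int (M - i) # ys) ` VL d i)" by auto
  qed
  show "(\<Union>i<M. (\<lambda>ys. int (M - i) # ys) ` VL d i) \<subseteq> VP (Suc d) M"
    unfolding VP_def VL_Suc by auto
qed

lemma card_VP_Suc: "card (VP (Suc d) M) = (\<Sum>i<M. card (VL d i))"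
proof -
  have "card (VP (Suc d) M) = (\<Sum>i<M. card ((\<lambda>ys. int (M - i) # ys) ` VL d i))"
    unfolding VP_Suc by (rule card_UN_disjoint) (auto simp: finite_VL)
  also have "\<dots> = (\<Sum>i<M. card (VL d i))"
    by (intro sum.cong refl card_image) (simp add: inj_on_def)
  finally show ?thesis .
qed

lemma card_VP_upper: "real (card (VP (Suc d) M)) \<le> 2^d * real M ^ Suc d / fact (Suc d)"
proof -
  have "real (card (VP (Suc d) M)) = (\<Sum>i<M. real (card (VL d i)))"
    unfolding card_VP_Suc by simp
  also have "\<dots> \<le> (\<Sum>i<M. 2^d * real i ^ d / fact d)"
    by (intro sum_mono card_VL_upper)
  also have "\<dots> = 2^d / fact d * (\<Sum>i<M. real i ^ d)"
    by (simp add: sum_distrib_left)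
  also have "\<dots> \<le> 2^d / fact d * (real M ^ Suc d / real (Suc d))"
    by (intro mult_left_mono powsum_upper) auto
  also have "\<dots> = 2^d * real M ^ Suc d / fact (Suc d)"
    by (simp add: field_simps)
  finally show ?thesis .
qed

lemma card_VP_lower: "real (card (VP (Suc d) M)) \<ge> 2^d * real (M - Suc d) ^ Suc d / fact (Suc d)"
proof -
  have "2^d * real (M - Suc d) ^ Suc d / fact (Suc d) = 2^d / fact d * (real (M - Suc d) ^ Suc d / real (Suc d))"
    by (simp add: field_simps)
  also have "\<dots> \<le> 2^d / fact d * (\<Sum>i<M. real (i - d) ^ d)"
    by (intro mult_left_mono powsum_lower) auto
  also have "\<dots> = (\<Sum>i<M. 2^d * real (i - d) ^ d / fact d)"
    by (simp add: sum_distrib_left)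
  also have "\<dots> \<le> (\<Sum>i<M. real (card (VL d i)))"
    by (intro sum_mono card_VL_lower)
  also have "\<dots> = real (card (VP (Suc d) M))"
    unfolding card_VP_Suc by simp
  finally show ?thesis .
qed

definition primL :: "int list \<Rightarrow> bool" where
  "primL xs \<longleftrightarrow> (\<forall>g::int. g > 1 \<longrightarrow> \<not> (\<forall>x\<in>set xs. g dvd x))"

definition PV :: "nat \<Rightarrow> nat \<Rightarrow> int list set" where
  "PV d M = {xs \<in> VP d M. primL xs}"

lemma NP_sub: "{xs \<in> VP d M. \<not> primL xs} \<subseteq> (\<Union>g\<in>{2..M}. map ((*) (int g)) ` VP d (M div g))"
proof
  fix xs assume xs: "xs \<in> {xs \<in> VP d M. \<not> primL xs}"
  then obtain g :: int where g: "g > 1" "\<forall>x\<in>set xs. g dvd x" unfolding primL_def by auto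
  have xsV: "length xs = d" "\<forall>x\<in>set xs. x \<noteq> 0" "sum_list (map (\<lambda>x. nat \<bar>x\<bar>) xs) \<le> M" "xs \<noteq> []" "hd xs \<ge> 1"
    using xs unfolding VP_def VL_def by auto
  have hdin: "hd xs \<in> set xs" using xsV(4) by simp
  have "g \<le> hd xs" using g(2) hdin xsV(5) by (intro zdvd_imp_le) auto
  moreover have "nat \<bar>hd xs\<bar> \<le> M"
  proof -
    have "nat \<bar>hd xs\<bar> \<le> sum_list (map (\<lambda>x. nat \<bar>x\<bar>) xs)" using hdin by (intro member_le_sum_list) auto
    then show ?thesis using xsV(3) by linarith
  qed
  ultimately have gM: "nat g \<le> M" using xsV(5) by linarith
  define ys where "ys = map (\<lambda>x. x div g) xs"
  have xs_eq: "xs = map ((*) (int (nat g))) ys"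
    unfolding ys_def using g by (simp add: map_idI)
  have "ys \<in> VP d (M div nat g)"
  proof -
    have "length ys = d" unfolding ys_def using xsV by simp
    moreover have "\<forall>y\<in>set ys. y \<noteq> 0"
    proof -
      have "x div g \<noteq> 0" if x: "x \<in> set xs" for x
      proof
        assume "x div g = 0"
        then have "x = 0" using g(2) x by (metis dvd_mult_div_cancel mult_zero_right)
        then show False using xsV(2) x by auto
      qed
      then show ?thesis unfolding ys_def by auto
    qed
    moreover have "ys \<noteq> []" unfolding ys_def using xsV(4) by simp
    moreover have "hd ys \<ge> 1"
    proof -
      have "hd ys = hd xs div g" unfolding ys_def using xsV(4) by (simp add: hd_map)
      moreover have "hd xs = g * (hd xs div g)" using g(2) hdin by simp
      moreover have "0 < hd xs div g" using \<open>g \<le> hd xs\<close> g(1) by (simp add: pos_imp_zdiv_pos_iff)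
      ultimately show ?thesis by simp
    qed
    moreover have "sum_list (map (\<lambda>x. nat \<bar>x\<bar>) ys) \<le> M div nat g"
    proof -
      have "sum_list (map (\<lambda>x. nat \<bar>x\<bar>) xs) = nat g * sum_list (map (\<lambda>x. nat \<bar>x\<bar>) ys)"
        unfolding xs_eq using g(1) by (simp add: sum_list_const_mult o_def abs_mult nat_mult_distrib)
      then have "sum_list (map (\<lambda>x. nat \<bar>x\<bar>) ys) * nat g \<le> M" using xsV(3) by (simp add: mult.commute)
      then show ?thesis using g(1) by (simp add: less_eq_div_iff_mult_less_eq)
    qed
    ultimately show ?thesis unfolding VP_def VL_def by auto
  qed
  moreover have "nat g \<in> {2..M}" using g(1) gM by auto
  ultimately show "xs \<in> (\<Union>g\<in>{2..M}. map ((*) (int g)) ` VP d (M div g))" using xs_eq by blast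
qed

lemma inv_sq_sum: "M \<ge> 2 \<Longrightarrow> (\<Sum>g\<in>{2..M}. 1 / real g ^ 2) \<le> 3/4 - 1 / real M"
proof (induction M)
  case 0 then show ?case by simp
next
  case (Suc M)
  show ?case
  proof (cases "M \<ge> 2")
    case False
    then have "Suc M = 2" using Suc.prems by auto
    then show ?thesis by simp
  next
    case True
    have "(\<Sum>g\<in>{2..Suc M}. 1 / real g ^ 2) = (\<Sum>g\<in>{2..M}. 1 / real g ^ 2) + 1 / real (Suc M) ^ 2"
      using True by simp
    also have "\<dots> \<le> 3/4 - 1 / real M + 1 / real (Suc M) ^ 2" using Suc.IH True by simp
    also have "\<dots> \<le> 3/4 - 1 / real (Suc M)"
    proof -
      have e: "1 / real M - 1 / real (Suc M) = 1 / (real M * real (Suc M))" using True by (simp add: field_simps)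
      have "real M * real (Suc M) \<le> real (Suc M) ^ 2" by (simp add: power2_eq_square)
      then have "1 / real (Suc M) ^ 2 \<le> 1 / (real M * real (Suc M))" using True
        by (intro divide_left_mono) auto
      then have "1 / real (Suc M) ^ 2 \<le> 1 / real M - 1 / real (Suc M)" using e by simp
      then show ?thesis by simp
    qed
    finally show ?thesis .
  qed
qed

lemma inv_sq_sum': "(\<Sum>g\<in>{2..M}. 1 / real g ^ 2) \<le> 3/4"
proof (cases "M \<ge> 2")
  case True then show ?thesis using inv_sq_sum[OF True] by (smt (verit) divide_nonneg_nonneg of_nat_0_le_iff)
next
  case False then have "{2..M} = {}" by auto
  then show ?thesis by simp
qed

lemma card_NP:
  assumes d: "d \<ge> 1"
  shows "real (card {xs \<in> VP (Suc d) M. \<not> primL xs}) \<le> (2^d * real M ^ Suc d / fact (Suc d)) * (3/4)"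
proof -
  have "card {xs \<in> VP (Suc d) M. \<not> primL xs} \<le> card (\<Union>g\<in>{2..M}. map ((*) (int g)) ` VP (Suc d) (M div g))"
    by (intro card_mono NP_sub) (auto intro: finite_VP)
  also have "\<dots> \<le> (\<Sum>g\<in>{2..M}. card (map ((*) (int g)) ` VP (Suc d) (M div g)))"
    by (rule card_UN_le) simp
  also have "\<dots> \<le> (\<Sum>g\<in>{2..M}. card (VP (Suc d) (M div g)))"
    by (intro sum_mono card_image_le finite_VP)
  finally have A0: "card {xs \<in> VP (Suc d) M. \<not> primL xs} \<le> (\<Sum>g\<in>{2..M}. card (VP (Suc d) (M div g)))" .
  have A: "real (card {xs \<in> VP (Suc d) M. \<not> primL xs}) \<le> (\<Sum>g\<in>{2..M}. real (card (VP (Suc d) (M div g))))"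
    using of_nat_mono[OF A0, where 'a=real] by simp
  have B: "real (card (VP (Suc d) (M div g))) \<le> (2^d * real M ^ Suc d / fact (Suc d)) * (1 / real g ^ 2)"
    if g: "g \<in> {2..M}" for g
  proof -
    have gp: "real g \<ge> 2" using g by auto
    have "M div g * g \<le> M" by (rule div_times_less_eq_dividend)
    then have "real (M div g) * real g \<le> real M" by (metis of_nat_le_iff of_nat_mult)
    then have "real (M div g) \<le> real M / real g" using gp by (simp add: le_divide_eq)
    then have "real (M div g) ^ Suc d \<le> (real M / real g) ^ Suc d" by (intro power_mono) auto
    also have "\<dots> = real M ^ Suc d / real g ^ Suc d" by (simp add: power_divide)
    also have "\<dots> \<le> real M ^ Suc d / real g ^ 2"
    proof (rule divide_left_mono)
      show "real g ^ 2 \<le> real g ^ Suc d" using gp d by (intro power_increasing) auto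
    qed (use gp in auto)
    finally have "real (M div g) ^ Suc d \<le> real M ^ Suc d / real g ^ 2" .
    then have "2^d * real (M div g) ^ Suc d / fact (Suc d) \<le> 2^d * (real M ^ Suc d / real g ^ 2) / fact (Suc d)"
      by (intro divide_right_mono mult_left_mono) auto
    then show ?thesis using card_VP_upper[of d "M div g"] by (simp add: field_simps)
  qed
  have "(\<Sum>g\<in>{2..M}. real (card (VP (Suc d) (M div g)))) \<le> (\<Sum>g\<in>{2..M}. (2^d * real M ^ Suc d / fact (Suc d)) * (1 / real g ^ 2))"
    using B by (intro sum_mono) auto
  also have "\<dots> = (2^d * real M ^ Suc d / fact (Suc d)) * (\<Sum>g\<in>{2..M}. 1 / real g ^ 2)"
    by (simp add: sum_distrib_left)
  also have "\<dots> \<le> (2^d * real M ^ Suc d / fact (Suc d)) * (3/4)"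
    by (intro mult_left_mono inv_sq_sum') auto
  finally show ?thesis using A by linarith
qed

lemma card_PV:
  assumes d: "d \<ge> 1"
  shows "real (card (PV (Suc d) M)) \<ge> 2^d * real (M - Suc d) ^ Suc d / fact (Suc d) - (2^d * real M ^ Suc d / fact (Suc d)) * (3/4)"
proof -
  have "VP (Suc d) M = PV (Suc d) M \<union> {xs \<in> VP (Suc d) M. \<not> primL xs}" unfolding PV_def by auto
  then have "card (VP (Suc d) M) \<le> card (PV (Suc d) M) + card {xs \<in> VP (Suc d) M. \<not> primL xs}"
    by (metis card_Un_le)
  then have "real (card (VP (Suc d) M)) \<le> real (card (PV (Suc d) M)) + real (card {xs \<in> VP (Suc d) M. \<not> primL xs})"
    by (metis of_nat_add of_nat_le_iff)
  then show ?thesis using card_VP_lower[of d M] card_NP[OF d, of M] by linarith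
qed

lemma e_lower: "exp 1 \<ge> (2.6::real)"
proof -
  have "(1 + 1 / real (16::nat)) ^ 16 \<le> exp (1::real)"
    using exp_ge_one_plus_x_over_n_power_n[of 16 1] by simp
  moreover have "(2.6::real) \<le> (1 + 1 / real (16::nat)) ^ 16" by (simp add: eval_nat_numeral)
  ultimately show ?thesis by linarith
qed

lemma one_plus_inv_pow: assumes "d \<ge> 1" shows "exp 1 \<le> (1 + 1 / real d) ^ Suc d"
proof -
  have dp: "real d > 0" using assms by auto
  have "ln (real d / (real d + 1)) \<le> real d / (real d + 1) - 1"
    using dp by (intro ln_le_minus_one) auto
  also have "\<dots> = - 1 / (real d + 1)" using dp by (simp add: field_simps)
  finally have l1: "ln (real d / (real d + 1)) \<le> - 1 / (real d + 1)" .
  have "ln (1 + 1 / real d) = - ln (real d / (real d + 1))"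
    using dp by (simp add: ln_div field_simps)
  with l1 have "ln (1 + 1 / real d) \<ge> 1 / (real d + 1)" by simp
  then have "real (Suc d) * ln (1 + 1 / real d) \<ge> 1" using dp by (simp add: field_simps)
  then have "exp 1 \<le> exp (real (Suc d) * ln (1 + 1 / real d))" by simp
  also have "\<dots> = (1 + 1 / real d) ^ Suc d"
    using dp by (subst exp_of_nat_mult) (simp add: add_pos_pos)
  finally show ?thesis .
qed

lemma fact_bound: "d \<ge> 1 \<Longrightarrow> fact d * exp (real d) \<le> exp 1 * real d ^ Suc d"
proof (induction d rule: dec_induct)
  case base then show ?case by simp
next
  case (step d)
  have dp: "real d > 0" using step by auto
  have A: "fact (Suc d) * exp (real (Suc d)) = real (Suc d) * exp 1 * (fact d * exp (real d))"
    by (simp add: exp_add[symmetric] algebra_simps)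
  have C0: "exp 1 * real d ^ Suc d \<le> (1 + 1 / real d) ^ Suc d * real d ^ Suc d"
    using one_plus_inv_pow[OF step.hyps(1)] by (intro mult_right_mono) auto
  have C1: "(1 + 1 / real d) ^ Suc d * real d ^ Suc d = real (Suc d) ^ Suc d"
    using dp by (simp add: power_mult_distrib[symmetric] field_simps)
  have "fact (Suc d) * exp (real (Suc d)) \<le> real (Suc d) * exp 1 * (exp 1 * real d ^ Suc d)"
    unfolding A using step.IH by (intro mult_left_mono) auto
  also have "\<dots> \<le> real (Suc d) * exp 1 * real (Suc d) ^ Suc d"
    using C0 C1 by (intro mult_left_mono) auto
  also have "\<dots> = exp 1 * real (Suc d) ^ Suc (Suc d)"
    by (simp only: power_Suc[of "real (Suc d)" "Suc d"] mult_ac)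
  finally show ?case .
qed

lemma final_count:
  assumes d: "d \<ge> 2" and n: "n \<ge> 40 * d * d + 600"
  shows "real (card (PV d (n div 5))) \<ge> 3 * (1/100)^2 * (real n / real d) ^ d"
proof -
  obtain d' where dd: "d = Suc d'" and d1: "d' \<ge> 1" using d by (cases d) auto
  define M where "M = n div 5"
  have M5: "5 * M + 4 \<ge> n" unfolding M_def by linarith
  have Mge: "M \<ge> 8 * d * d" using n M5 by linarith
  have Md: "M \<ge> d"
  proof -
    have "1 \<le> 8 * d" using d by simp
    then have "d * 1 \<le> d * (8 * d)" by (rule mult_le_mono2)
    then have "d \<le> 8 * d * d" by (simp add: mult.commute mult.left_commute)
    then show ?thesis using Mge by linarith
  qed
  have Mpos: "real M > 0" using Md d by auto
  have rM: "real M \<ge> real n / 5 - 1" using M5 by linarith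
  have dpos: "real d > 0" using d by auto
  define A where "A = 2 ^ d' * real M ^ d / fact d"
  have cPV: "real (card (PV d M)) \<ge> 2 ^ d' * real (M - d) ^ d / fact d - A * (3/4)"
    using card_PV[OF d1, of M] unfolding A_def dd .
  have b78: "real (M - d) ^ d \<ge> (7/8) * real M ^ d"
  proof -
    have "1 + real d * (- real d / real M) \<le> (1 + (- real d / real M)) ^ d"
      using Md Mpos by (intro Bernoulli_inequality) (simp add: field_simps)
    moreover have "real d * real d / real M \<le> 1/8"
    proof -
      have "real (8 * d * d) \<le> real M" using Mge by (rule of_nat_mono)
      then have "8 * (real d * real d) \<le> real M" by simp
      then show ?thesis using Mpos by (simp add: field_simps)
    qed
    ultimately have "(1 + (- real d / real M)) ^ d \<ge> 7/8" by simp
    moreover have "real (M - d) = real M * (1 + (- real d / real M))" using Md Mpos by (simp add: field_simps)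
    ultimately show ?thesis using Mpos by (simp add: power_mult_distrib mult_left_mono mult.commute)
  qed
  have cA: "real (card (PV d M)) \<ge> A / 8"
  proof -
    have "2 ^ d' * real (M - d) ^ d / fact d \<ge> 2 ^ d' * ((7/8) * real M ^ d) / fact d"
      using b78 by (intro divide_right_mono mult_left_mono) auto
    also have "2 ^ d' * ((7/8) * real M ^ d) / fact d = (7/8) * A" unfolding A_def by simp
    finally show ?thesis using cPV by linarith
  qed
  have fb: "fact d * exp (real d) \<le> exp 1 * real d ^ Suc d" using fact_bound d by auto
  have e26: "exp 1 \<ge> (26/10::real)" by (rule e_lower)
  have e3: "exp 1 \<le> (3::real)" by (rule exp_le)
  have expd: "exp (real d) = exp 1 ^ d" using exp_of_nat_mult[of d 1] by simp
  have A2: "A \<ge> (2 * exp 1 * real M) ^ d / (2 * exp 1 * real d ^ Suc d)"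
  proof -
    have fp: "fact d > (0::real)" by simp
    have "fact d \<le> exp 1 * real d ^ Suc d / exp (real d)" using fb by (simp add: field_simps)
    then have "A \<ge> 2 ^ d' * real M ^ d / (exp 1 * real d ^ Suc d / exp (real d))"
      unfolding A_def using fp Mpos dpos by (intro divide_left_mono) (auto intro!: mult_pos_pos divide_pos_pos)
    also have "2 ^ d' * real M ^ d / (exp 1 * real d ^ Suc d / exp (real d)) = (2 * exp 1 * real M) ^ d / (2 * exp 1 * real d ^ Suc d)"
    proof -
      have p2: "(2::real) ^ d = 2 * 2 ^ d'" using dd by simp
      have pm: "(2 * exp 1 * real M) ^ d = 2 ^ d * exp 1 ^ d * real M ^ d" by (simp add: power_mult_distrib)
      have ep: "exp 1 ^ d > (0::real)" by simp
      have dp2: "real d ^ Suc d > 0" using dpos by simp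
      show ?thesis unfolding pm p2 expd using ep dp2 by (simp add: field_simps)
    qed
    finally show ?thesis .
  qed
  have b103: "2 * exp 1 * real M \<ge> (103/100) * real n"
  proof -
    have n600: "real n \<ge> 600" using n by linarith
    have "2 * exp 1 * real M \<ge> 2 * (26/10) * (real n / 5 - 1)"
      using e26 rM Mpos n600 by (intro mult_mono) auto
    moreover have "2 * (26/10) * (real n / 5 - 1) = (52/50) * real n - 52/10" by (simp add: field_simps)
    moreover note n600
    ultimately show ?thesis by linarith
  qed
  have pw: "(2 * exp 1 * real M) ^ d \<ge> (3/100) * real d * real n ^ d"
  proof -
    have "(2 * exp 1 * real M) ^ d \<ge> ((103/100) * real n) ^ d" using b103 by (intro power_mono) auto
    moreover have "((103/100)::real) ^ d \<ge> 1 + real d * (3/100)" using Bernoulli_inequality[of "(3/100)::real" d] by simp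
    moreover have "((103/100) * real n) ^ d = (103/100) ^ d * real n ^ d" by (rule power_mult_distrib)
    moreover have "(103/100) ^ d * real n ^ d \<ge> (1 + real d * (3/100)) * real n ^ d"
      using \<open>((103/100)::real) ^ d \<ge> 1 + real d * (3/100)\<close> by (intro mult_right_mono) auto
    ultimately have "(2 * exp 1 * real M) ^ d \<ge> (1 + real d * (3/100)) * real n ^ d" by linarith
    moreover have "(1 + real d * (3/100)) * real n ^ d \<ge> (3/100) * real d * real n ^ d"
      by (intro mult_right_mono) auto
    ultimately show ?thesis by linarith
  qed
  have Yp: "0 < 2 * exp 1 * real d ^ Suc d" using dpos by simp
  have "(3/100) * real d * real n ^ d / (2 * exp 1 * real d ^ Suc d) \<le> (2 * exp 1 * real M) ^ d / (2 * exp 1 * real d ^ Suc d)"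
    using pw Yp by (intro divide_right_mono) auto
  then have A3: "A \<ge> (3/100) * real d * real n ^ d / (2 * exp 1 * real d ^ Suc d)" using A2 by linarith
  have "(5/1000) * (real n / real d) ^ d \<le> ((15/1000) / exp 1) * (real n / real d) ^ d"
  proof (rule mult_right_mono)
    show "(5/1000) \<le> (15/1000) / exp (1::real)" using e3 by (simp add: field_simps)
  qed auto
  also have "((15/1000) / exp 1) * (real n / real d) ^ d = (3/100) * real d * real n ^ d / (2 * exp 1 * real d ^ Suc d)"
    using dpos by (simp add: power_divide field_simps)
  also have "\<dots> \<le> A" by (rule A3)
  finally have "A \<ge> (5/1000) * (real n / real d) ^ d" .
  then have "real (card (PV d M)) \<ge> (5/1000) / 8 * (real n / real d) ^ d" using cA by linarith
  moreover have "(5/1000) / 8 * (real n / real d) ^ d \<ge> 3 * (1/100)^2 * (real n / real d) ^ d"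
    by (intro mult_right_mono) (auto simp: power2_eq_square)
  ultimately show ?thesis unfolding M_def by linarith
qed

definition fun_of :: "int list \<Rightarrow> nat \<Rightarrow> int" where
  "fun_of xs = (\<lambda>j. if j < length xs then xs ! j else 0)"

lemma int_sum_nat_abs: "int (sum_list (map (\<lambda>x. nat \<bar>x\<bar>) xs)) = sum_list (map abs xs)"
  by (induction xs) auto

lemma W_props:
  assumes xs: "xs \<in> PV d M" and d: "d \<ge> 1" and M: "5 * M \<le> n"
  shows "goodw d (fun_of xs) \<and> 5 * (\<Sum>i<d. \<bar>fun_of xs i\<bar>) \<le> int n"
proof -
  have x: "length xs = d" "xs \<noteq> []" "hd xs \<ge> 1" "primL xs" "sum_list (map (\<lambda>x. nat \<bar>x\<bar>) xs) \<le> M"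
    using xs unfolding PV_def VP_def VL_def by auto
  have w0: "fun_of xs 0 \<ge> 1" using x d unfolding fun_of_def by (simp add: hd_conv_nth)
  have wd: "\<forall>j\<ge>d. fun_of xs j = 0" using x unfolding fun_of_def by auto
  have pr: "prim d (fun_of xs)"
    unfolding prim_def
  proof (intro allI impI notI)
    fix g :: int assume g: "g > 1" and dv: "\<forall>j<d. g dvd fun_of xs j"
    have "\<forall>x\<in>set xs. g dvd x"
    proof
      fix x assume "x \<in> set xs"
      then obtain j where "j < length xs" "xs ! j = x" by (auto simp: in_set_conv_nth)
      then show "g dvd x" using dv x(1) unfolding fun_of_def by force
    qed
    then show False using x(4) g unfolding primL_def by auto
  qed
  have "(\<Sum>i<d. \<bar>fun_of xs i\<bar>) = (\<Sum>i<length xs. \<bar>xs ! i\<bar>)"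
    using x(1) unfolding fun_of_def by (intro sum.cong) auto
  also have "\<dots> = sum_list (map abs xs)"
    by (simp add: sum_list_sum_nth atLeast0LessThan)
  also have "\<dots> = int (sum_list (map (\<lambda>x. nat \<bar>x\<bar>) xs))" by (simp add: int_sum_nat_abs)
  finally have "5 * (\<Sum>i<d. \<bar>fun_of xs i\<bar>) \<le> int n" using x(5) M by linarith
  then show ?thesis using w0 wd pr unfolding goodw_def by auto
qed

lemma inj_fun_of: "inj_on fun_of (PV d M)"
proof (rule inj_onI)
  fix xs ys assume xs: "xs \<in> PV d M" and ys: "ys \<in> PV d M" and e: "fun_of xs = fun_of ys"
  have l: "length xs = d" "length ys = d" using xs ys unfolding PV_def VP_def VL_def by auto
  show "xs = ys"
  proof (rule nth_equalityI)
    show "length xs = length ys" using l by simp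
    fix i assume "i < length xs"
    then show "xs ! i = ys ! i" using fun_cong[OF e, of i] l unfolding fun_of_def by auto
  qed
qed

theorem theorem1p6:
  shows "\<exists>c>0. \<forall>d\<ge>2. \<exists>n0. \<forall>n\<ge>n0. \<forall>\<epsilon> T q.
           0 < \<epsilon> \<and> \<epsilon> \<le> 1/10 \<and> nonadaptive_tester \<epsilon> (grid n d) T \<and> query_bound T q
           \<longrightarrow> real q \<ge> c * (real n / real d) powr (real d / 2)"
proof (intro exI[of _ "1/100::real"] conjI allI impI)
  show "(0::real) < 1/100" by simp
  fix d :: nat assume d: "d \<ge> 2"
  show "\<exists>n0. \<forall>n\<ge>n0. \<forall>\<epsilon> T q.
           0 < \<epsilon> \<and> \<epsilon> \<le> 1/10 \<and> nonadaptive_tester \<epsilon> (grid n d) T \<and> query_bound T q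
           \<longrightarrow> real q \<ge> 1/100 * (real n / real d) powr (real d / 2)"
  proof (intro exI[of _ "40 * d * d + 600"] allI impI, elim conjE)
    fix n \<epsilon> T q
    assume n: "n \<ge> 40 * d * d + 600" and eps: "\<epsilon> \<le> 1/10"
      and T: "nonadaptive_tester \<epsilon> (grid n d) T" and qb: "query_bound T q"
    define W where "W = fun_of ` PV d (n div 5)"
    have cW: "card W = card (PV d (n div 5))" unfolding W_def by (rule card_image[OF inj_fun_of])
    have fW: "finite W" unfolding W_def PV_def using finite_VP by auto
    have dpos: "real d > 0" using d by auto
    have npos: "real n > 0" using n by auto
    define X where "X = (real n / real d) ^ d"
    have Xpos: "X > 0" unfolding X_def using dpos npos by simp
    have lowW: "real (card W) \<ge> 3 * (1/100)^2 * X" unfolding cW X_def by (rule final_count[OF d n])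
    have "3 * (1/100)^2 * X > 0" using Xpos by simp
    then have "real (card W) > 0" using lowW by linarith
    then have "card W > 0" by simp
    then have Wne: "W \<noteq> {}" by auto
    have props: "\<And>w. w \<in> W \<Longrightarrow> goodw d w \<and> 5 * (\<Sum>i<d. \<bar>w i\<bar>) \<le> int n"
    proof -
      fix w assume "w \<in> W"
      then obtain xs where xs: "xs \<in> PV d (n div 5)" and w: "w = fun_of xs" unfolding W_def by auto
      have h5: "5 * (n div 5) \<le> n" by simp
      have d1: "d \<ge> 1" using d by simp
      show "goodw d w \<and> 5 * (\<Sum>i<d. \<bar>w i\<bar>) \<le> int n" unfolding w by (rule W_props[OF xs d1 h5])
    qed
    have n1: "n \<ge> 1" using n by auto
    have yb: "real (card W) \<le> 3 * real q ^ 2" by (rule yao_bound[OF fW Wne props n1 eps T qb])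
    have sq: "(1/100 * (real n / real d) powr (real d / 2)) ^ 2 \<le> real q ^ 2"
    proof -
      have "((real n / real d) powr (real d / 2)) ^ 2 = (real n / real d) powr (real d / 2) * (real n / real d) powr (real d / 2)"
        by (simp add: power2_eq_square)
      also have "\<dots> = (real n / real d) powr (real d / 2 + real d / 2)" by (simp only: powr_add)
      also have "\<dots> = (real n / real d) powr (real d)" by simp
      also have "\<dots> = X" unfolding X_def using dpos npos by (simp add: powr_realpow)
      finally have "((real n / real d) powr (real d / 2)) ^ 2 = X" .
      then have "(1/100 * (real n / real d) powr (real d / 2)) ^ 2 = (1/100)^2 * X"
        by (simp only: power_mult_distrib)
      then show ?thesis using lowW yb by linarith
    qed
    show "real q \<ge> 1/100 * (real n / real d) powr (real d / 2)"
      by (rule power2_le_imp_le[OF sq]) simp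
  qed
qed

end
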